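(* Let $X$ be a finite set with $|X|\ge2$ and $f:2^X\to\mathbb{R}_{\ge0}$ a normalized monotone submodular function possessing supermodularity of conditioning, with $f(x)>0$ for all $x\in X$. Then for all $S\subseteq X$ and $x\in X\setminus S$, \[ f(x\mid S)\ \ge\ \underline f(x\mid S)\ \ge\ f(x)\big(1-|S|\,\tau_2\big), \qquad\text{and hence}\qquad f(x\mid S)\ \ge\ f(x)\big(1-\min\{|S|\tau_2,1\}\big). \]
   Context: $f(x\mid A):=f(A\cup\{x\})-f(A)$, $f(x):=f(\{x\})$, $f(x\mid y):=f(x\mid\{y\})$. Pairwise lower estimate: $\underline f(x\mid S):=f(x)-\sum_{y\in S}(f(x)-f(x\mid y))$. The 2-cardinality curvature is $\tau_2:=1-\min_{x\in X,\ y\in X\setminus\{x\}} f(x\mid y)/f(x)$. Supermodularity of conditioning: for all $S\subseteq X$, $A\subseteq B\subseteq X$ and $C\subseteq X\setminus B$, $f(S\mid A)-f(S\mid A\cup C)\ge f(S\mid B)-f(S\mid B\cup C)$, where $f(T\mid A):=f(A\cup T)-f(A)$. *)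

theory Defs
  imports "HOL-Analysis.Analysis"
begin

text \<open>Set functions f : 2^X \<rightarrow> R on a ground set X, represented as functions on 'a set,
  only their values on subsets of X matter.\<close>

definition marg :: "('a set \<Rightarrow> real) \<Rightarrow> 'a set \<Rightarrow> 'a set \<Rightarrow> real" where
  "marg f T A = f (A \<union> T) - f A"

definition normalized :: "('a set \<Rightarrow> real) \<Rightarrow> bool" where
  "normalized f \<longleftrightarrow> f {} = 0"

definition nonneg_on :: "'a set \<Rightarrow> ('a set \<Rightarrow> real) \<Rightarrow> bool" where
  "nonneg_on X f \<longleftrightarrow> (\<forall>A. A \<subseteq> X \<longrightarrow> f A \<ge> 0)"

definition monotone_setfun :: "'a set \<Rightarrow> ('a set \<Rightarrow> real) \<Rightarrow> bool" where
  "monotone_setfun X f \<longleftrightarrow> (\<forall>A B. A \<subseteq> B \<and> B \<subseteq> X \<longrightarrow> f A \<le> f B)"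

definition submodular :: "'a set \<Rightarrow> ('a set \<Rightarrow> real) \<Rightarrow> bool" where
  "submodular X f \<longleftrightarrow>
     (\<forall>A B. A \<subseteq> X \<and> B \<subseteq> X \<longrightarrow> f (A \<union> B) + f (A \<inter> B) \<le> f A + f B)"

definition supermod_conditioning :: "'a set \<Rightarrow> ('a set \<Rightarrow> real) \<Rightarrow> bool" where
  "supermod_conditioning X f \<longleftrightarrow>
     (\<forall>S A B C. S \<subseteq> X \<and> A \<subseteq> B \<and> B \<subseteq> X \<and> C \<subseteq> X - B \<longrightarrow>
        marg f S A - marg f S (A \<union> C) \<ge> marg f S B - marg f S (B \<union> C))"

definition lower_est :: "('a set \<Rightarrow> real) \<Rightarrow> 'a \<Rightarrow> 'a set \<Rightarrow> real" where
  "lower_est f x S = f {x} - (\<Sum>y\<in>S. f {x} - marg f {x} {y})"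

definition tau2 :: "'a set \<Rightarrow> ('a set \<Rightarrow> real) \<Rightarrow> real" where
  "tau2 X f = 1 - Min {marg f {x} {y} / f {x} | x y. x \<in> X \<and> y \<in> X - {x}}"

end

theory Submission
  imports Defs
begin

lemma part1:
  assumes fin: "finite S" and "S \<subseteq> X" and "x \<in> X - S"
    and nm: "normalized f" and sc: "supermod_conditioning X f"
  shows "marg f {x} S \<ge> lower_est f x S"
  using assms(1,2,3)
proof (induction S rule: finite_induct)
  case empty
  then show ?case using nm by (simp add: marg_def lower_est_def normalized_def)
next
  case (insert y T)
  have IH: "marg f {x} T \<ge> lower_est f x T" using insert by auto
  have "marg f {x} {} - marg f {x} ({} \<union> {y}) \<ge> marg f {x} T - marg f {x} (T \<union> {y})"
  proof -
    have "{x} \<subseteq> X" "{} \<subseteq> T" "T \<subseteq> X" "{y} \<subseteq> X - T" using insert by auto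
    thus ?thesis using sc unfolding supermod_conditioning_def by blast
  qed
  moreover have "marg f {x} {} = f {x}" using nm by (simp add: marg_def normalized_def)
  moreover have "lower_est f x (insert y T) = lower_est f x T - (f {x} - marg f {x} {y})"
    using insert by (simp add: lower_est_def)
  moreover have "T \<union> {y} = insert y T" by auto
  ultimately show ?case using IH by simp
qed

theorem mainTheorem7:
  fixes X :: "'a set" and f :: "'a set \<Rightarrow> real"
  assumes "finite X" and "card X \<ge> 2"
    and "nonneg_on X f" and "normalized f" and "monotone_setfun X f" and "submodular X f"
    and "supermod_conditioning X f"
    and "\<forall>x\<in>X. f {x} > 0"
  shows "\<forall>S x. S \<subseteq> X \<and> x \<in> X - S \<longrightarrow>
           marg f {x} S \<ge> lower_est f x S \<and>
           lower_est f x S \<ge> f {x} * (1 - real (card S) * tau2 X f) \<and>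
           marg f {x} S \<ge> f {x} * (1 - min (real (card S) * tau2 X f) 1)"
proof (intro allI impI)
  fix S x assume Sx: "S \<subseteq> X \<and> x \<in> X - S"
  have finS: "finite S" using Sx assms(1) finite_subset by blast
  have p1: "marg f {x} S \<ge> lower_est f x S"
    using part1[OF finS] Sx assms by blast
  define M where "M = {marg f {x} {y} / f {x} | x y. x \<in> X \<and> y \<in> X - {x}}"
  have finM: "finite M"
  proof -
    have "M \<subseteq> (\<lambda>(x,y). marg f {x} {y} / f {x}) ` (X \<times> X)" unfolding M_def by auto
    thus ?thesis using assms(1) finite_subset by blast
  qed
  have fx: "f {x} > 0" using Sx assms(8) by auto
  have each: "f {x} - marg f {x} {y} \<le> f {x} * tau2 X f" if "y \<in> S" for y
  proof -
    have "marg f {x} {y} / f {x} \<in> M" unfolding M_def using that Sx by blast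
    hence "Min M \<le> marg f {x} {y} / f {x}" using finM by simp
    hence "f {x} * Min M \<le> marg f {x} {y}" using fx by (simp add: field_simps)
    thus ?thesis unfolding tau2_def M_def[symmetric] by (simp add: algebra_simps)
  qed
  have "(\<Sum>y\<in>S. f {x} - marg f {x} {y}) \<le> (\<Sum>y\<in>S. f {x} * tau2 X f)"
    by (rule sum_mono) (use each in auto)
  hence p2: "lower_est f x S \<ge> f {x} * (1 - real (card S) * tau2 X f)"
    unfolding lower_est_def by (simp add: algebra_simps)
  have mono: "marg f {x} S \<ge> 0"
  proof -
    have "S \<subseteq> S \<union> {x} \<and> S \<union> {x} \<subseteq> X" using Sx by auto
    thus ?thesis using assms(5) unfolding monotone_setfun_def marg_def by fastforce
  qed
  have p3: "marg f {x} S \<ge> f {x} * (1 - min (real (card S) * tau2 X f) 1)"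
  proof (cases "real (card S) * tau2 X f \<le> 1")
    case True thus ?thesis using p1 p2 by (simp add: min_def)
  next
    case False thus ?thesis using mono by (simp add: min_def)
  qed
  show "marg f {x} S \<ge> lower_est f x S \<and>
           lower_est f x S \<ge> f {x} * (1 - real (card S) * tau2 X f) \<and>
           marg f {x} S \<ge> f {x} * (1 - min (real (card S) * tau2 X f) 1)"
    using p1 p2 p3 by blast
qed

end
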